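(* Let $p$ be an odd prime, $q=p^e$ with $e\ge 1$, and let $k$ be an integer with $1\le k\le e$. Then $F_{2p^k}(1,x)$ is a permutation polynomial of $\mathbb{F}_q$ if and only if $\gcd\!\left(\frac{p^k-1}{2},\,q-1\right)=1$.
   Context: For an integer $n\ge 1$, the $n$-th reversed Dickson polynomial of the third kind is $F_n(a,x)=\sum_{i=0}^{\lfloor n/2\rfloor}\frac{n-2i}{n-i}\binom{n-i}{i}(-x)^i a^{n-2i}$, where each coefficient $\frac{n-2i}{n-i}\binom{n-i}{i}$ is an integer (read in $\mathbb{F}_q$), and $F_0(a,x)=0$. A polynomial $f\in\mathbb{F}_q[x]$ is a permutation polynomial of $\mathbb{F}_q$ if $c\mapsto f(c)$ is a bijection of $\mathbb{F}_q$. *)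

theory Defs
  imports "HOL-Computational_Algebra.Computational_Algebra"
begin

text \<open>Integer coefficient (n-2i)/(n-i) * binom(n-i,i) of the reversed Dickson
  polynomial of the third kind (exact division for 1 <= n, i <= n div 2).\<close>
definition rd3_coeff :: "nat \<Rightarrow> nat \<Rightarrow> nat" where
  "rd3_coeff n i = ((n - 2*i) * ((n - i) choose i)) div (n - i)"

text \<open>n-th reversed Dickson polynomial of the third kind F_n(a,x), evaluated at x;
  F_0 = 0.\<close>
definition rev_dickson3 :: "nat \<Rightarrow> 'a::comm_ring_1 \<Rightarrow> 'a \<Rightarrow> 'a" where
  "rev_dickson3 n a x =
     (if n = 0 then 0
      else (\<Sum>i = 0..n div 2. of_nat (rd3_coeff n i) * (- x) ^ i * a ^ (n - 2*i)))"

definition is_perm_poly :: "('a \<Rightarrow> 'a) \<Rightarrow> bool" where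
  "is_perm_poly f \<longleftrightarrow> bij f"

end

theory Submission imports Defs "HOL-Number_Theory.Number_Theory" begin


definition SS :: "nat \<Rightarrow> 'a::comm_ring_1 \<Rightarrow> 'a" where
  "SS m x = (\<Sum>i\<le>m. of_nat ((m - i) choose i) * (- x) ^ i)"

lemma choose_aux: "(Suc m - j) choose (Suc j) = ((m - j) choose j) + ((m - j) choose Suc j)"
proof (cases "j \<le> m")
  case True
  then have "Suc m - j = Suc (m - j)" by simp
  then show ?thesis by simp
next
  case False
  then show ?thesis by simp
qed

lemma SS_0: "SS 0 x = 1" by (simp add: SS_def)
lemma SS_1: "SS 1 x = 1" by (simp add: SS_def)

lemma SS_rec: "SS (Suc (Suc m)) x = SS (Suc m) x - x * SS m x"
proof -
  have "SS (Suc (Suc m)) x = 1 + (\<Sum>j\<le>Suc m. of_nat ((Suc m - j) choose Suc j) * (- x) ^ Suc j)"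
    unfolding SS_def by (subst sum.atMost_Suc_shift) simp
  also have "\<dots> = 1 + (\<Sum>j\<le>Suc m. of_nat ((m - j) choose j) * (- x) ^ Suc j)
       + (\<Sum>j\<le>Suc m. of_nat ((m - j) choose Suc j) * (- x) ^ Suc j)"
    by (simp add: choose_aux sum.distrib[symmetric] algebra_simps)
  also have "(\<Sum>j\<le>Suc m. of_nat ((m - j) choose j) * (- x) ^ Suc j) = - x * SS m x"
    by (simp add: SS_def sum_distrib_left mult_ac)
  also have "(\<Sum>j\<le>Suc m. of_nat ((m - j) choose Suc j) * (- x) ^ Suc j)
      = (\<Sum>j\<le>m. of_nat ((m - j) choose Suc j) * (- x) ^ Suc j)"
    by simp
  finally have e: "SS (Suc (Suc m)) x = 1 + - x * SS m x + (\<Sum>j\<le>m. of_nat ((m - j) choose Suc j) * (- x) ^ Suc j)" .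
  have "1 + (\<Sum>j\<le>m. of_nat ((m - j) choose Suc j) * (- x) ^ Suc j) = SS (Suc m) x"
    unfolding SS_def by (subst sum.atMost_Suc_shift) simp
  then show ?thesis using e by (simp add: algebra_simps)
qed

lemma SS_ab: fixes a b :: "'a::comm_ring_1" assumes "a + b = 1"
  shows "(a - b) * SS m (a * b) = a ^ Suc m - b ^ Suc m \<and> (a - b) * SS (Suc m) (a * b) = a ^ Suc (Suc m) - b ^ Suc (Suc m)"
proof (induction m)
  case 0
  have "a^2 - b^2 = (a - b) * (a + b)" by (simp add: algebra_simps power2_eq_square)
  then show ?case using assms by (simp add: SS_0 SS_1 power2_eq_square del: SS_1) (simp add: SS_def)
next
  case (Suc m)
  have a: "a = 1 - b" using assms by (simp add: algebra_simps)
  have "(a - b) * SS (Suc (Suc m)) (a * b) = (a - b) * SS (Suc m) (a * b) - a * b * ((a - b) * SS m (a * b))"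
    by (simp add: SS_rec algebra_simps)
  also have "\<dots> = (a ^ Suc (Suc m) - b ^ Suc (Suc m)) - a * b * (a ^ Suc m - b ^ Suc m)"
    using Suc by simp
  also have "\<dots> = a ^ Suc (Suc (Suc m)) - b ^ Suc (Suc (Suc m))"
    unfolding a by (simp add: algebra_simps)
  finally show ?case using Suc by simp
qed

lemma rd3_coeff_eq: assumes "1 \<le> n" "i \<le> n div 2"
  shows "rd3_coeff n i = (n - 1 - i) choose i"
proof -
  have pos: "n - i > 0" using assms by linarith
  have "(n - i - i) * ((n - i) choose i) = (n - i) * ((n - i - 1) choose i)"
    by (rule binomial_absorb_comp)
  moreover have "n - i - i = n - 2 * i" by simp
  moreover have "n - i - 1 = n - 1 - i" by simp
  ultimately have "(n - 2*i) * ((n - i) choose i) = (n - i) * ((n - 1 - i) choose i)" by simp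
  then show ?thesis unfolding rd3_coeff_def using pos by simp
qed

lemma rev_SS: fixes c :: "'a::comm_ring_1" assumes "N \<ge> 1"
  shows "rev_dickson3 (2 * N) 1 c = SS (2 * N - 1) c"
proof -
  have "rev_dickson3 (2 * N) 1 c = (\<Sum>i\<le>N. of_nat ((2 * N - 1 - i) choose i) * (- c) ^ i)"
    unfolding rev_dickson3_def using assms
    by (auto simp: rd3_coeff_eq atMost_atLeast0 intro!: sum.cong)
  also have "\<dots> = (\<Sum>i\<le>2 * N - 1. of_nat ((2 * N - 1 - i) choose i) * (- c) ^ i)"
  proof (rule sum.mono_neutral_left)
    show "\<forall>i\<in>{..2 * N - 1} - {..N}. of_nat ((2 * N - 1 - i) choose i) * (- c) ^ i = 0"
    proof
      fix i assume "i \<in> {..2 * N - 1} - {..N}"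
      then have "2 * N - 1 - i < i" by auto
      then show "of_nat ((2 * N - 1 - i) choose i) * (- c) ^ i = 0" by (simp add: binomial_eq_0)
    qed
  qed (use assms in auto)
  finally show ?thesis by (simp add: SS_def)
qed

lemma SS_char: fixes a b :: "'b::idom"
  assumes pr: "prime CHAR('b)" and N: "N = CHAR('b) ^ k" and oddN: "odd N"
    and ab: "a + b = 1" and ne: "a \<noteq> b"
  shows "SS (2 * N - 1) (a * b) = (1 - 4 * a * b) ^ ((N - 1) div 2)"
proof -
  define d where "d = (N - 1) div 2"
  have Nd: "N = Suc (2 * d)" using oddN unfolding d_def by (cases N) auto
  have "(a - b) * SS (2 * N - 1) (a * b) = a ^ (2 * N) - b ^ (2 * N)"
    using SS_ab[OF ab, of "2 * N - 1"] Nd by simp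
  also have "\<dots> = (a ^ N + (- b) ^ N) * (a ^ N + b ^ N)"
    using oddN by (simp add: power_mult algebra_simps power2_eq_square flip: power_mult_distrib mult_2)
  also have "a ^ N + b ^ N = 1"
    using freshmans_dream'[OF pr N, of a b] ab by simp
  also have "a ^ N + (- b) ^ N = (a - b) ^ N"
    using freshmans_dream'[OF pr N, of a "-b"] by simp
  also have "(a - b) ^ N = (a - b) * ((a - b)^2) ^ d"
    by (simp add: Nd power_mult)
  also have "(a - b)^2 = 1 - 4 * a * b"
  proof -
    have "(a - b)^2 = (a + b)^2 - 4 * a * b" by (simp add: power2_eq_square algebra_simps)
    then show ?thesis using ab by simp
  qed
  finally have "(a - b) * (SS (2 * N - 1) (a * b) - (1 - 4 * a * b) ^ d) = 0"
    by (simp add: algebra_simps)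
  then show ?thesis using ne unfolding d_def by simp
qed

lemma pcompose_power: "pcompose (p ^ n) q = (pcompose p q) ^ n"
  by (induction n) (simp_all add: pcompose_1 pcompose_mult)

lemma pcompose_of_nat: "pcompose (of_nat n) q = of_nat n"
  by (simp add: of_nat_poly)

lemma pcompose_SS: fixes p q :: "'a::comm_ring_1 poly"
  shows "pcompose (SS m p) q = SS m (pcompose p q)"
  unfolding SS_def by (simp add: pcompose_sum pcompose_mult pcompose_power pcompose_uminus pcompose_of_nat)

lemma poly_SS: "poly (SS m p) c = SS m (poly p c)"
  unfolding SS_def by (simp add: poly_sum of_nat_poly)

lemma SS_field: fixes c :: "'a::field"
  assumes pr: "prime CHAR('a)" and two: "CHAR('a) \<noteq> 2" and N: "N = CHAR('a) ^ k"
  shows "SS (2 * N - 1) c = (1 - 4 * c) ^ ((N - 1) div 2)"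
proof -
  define X :: "'a poly" where "X = [:0, 1:]"
  define q where "q = X * (1 - X)"
  define G where "G = SS (2 * N - 1) X - (1 - 4 * X) ^ ((N - 1) div 2)"
  have "CHAR('a) > 2" using pr two prime_ge_2_nat[OF pr] by linarith
  then have "odd CHAR('a)" using pr prime_odd_nat by blast
  then have oddN: "odd N" using N by simp
  have two0: "(2::'a) \<noteq> 0"
  proof
    assume "(2::'a) = 0"
    then have "of_nat 2 = (0::'a)" by simp
    then have "CHAR('a) dvd 2" by (simp only: of_nat_eq_0_iff_char_dvd)
    then show False using pr two primes_dvd_imp_eq two_is_prime_nat by blast
  qed
  have ne: "X \<noteq> 1 - X"
  proof
    assume "X = 1 - X"
    then have "Polynomial.coeff X 1 = Polynomial.coeff (1 - X) 1" by (rule arg_cong)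
    moreover have "Polynomial.coeff X 1 = 1" by (simp add: X_def)
    moreover have "Polynomial.coeff (1 - X) 1 = -1" by (simp add: X_def coeff_diff)
    ultimately have "(1::'a) = -1" by simp
    then have "(2::'a) = 0" by (simp add: eq_neg_iff_add_eq_0)
    with two0 show False by simp
  qed
  have "SS (2 * N - 1) q = (1 - 4 * q) ^ ((N - 1) div 2)"
    unfolding q_def using SS_char[where a=X and b="1 - X" and N=N and k=k] pr N oddN ne
    by (simp add: mult.assoc)
  moreover have Xq: "pcompose X q = q" by (simp add: X_def pcompose_pCons)
  moreover have "pcompose (4 * X) q = 4 * q"
    using Xq by (simp add: pcompose_mult numeral_poly pcompose_smult)
  ultimately have "pcompose G q = 0"
    unfolding G_def by (simp add: pcompose_diff pcompose_SS pcompose_power pcompose_1 pcompose_smult)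
  moreover have "degree q > 0"
  proof -
    have "Polynomial.coeff q 2 = -1" by (simp add: q_def X_def numeral_2_eq_2 coeff_pCons algebra_simps)
    then have "2 \<le> degree q" by (intro le_degree) simp
    then show ?thesis by simp
  qed
  ultimately have "G = 0" using pcompose_eq_0 by blast
  then have "poly G c = 0" by simp
  then show ?thesis unfolding G_def by (simp add: poly_SS X_def mult.commute)
qed



lemma ff_fermat: fixes x :: "'a::{finite,field}" assumes "x \<noteq> 0"
  shows "x ^ (card (UNIV :: 'a set) - 1) = 1"
proof -
  define U where "U = (UNIV :: 'a set) - {0}"
  have fin: "finite U" by (simp add: U_def)
  have cU: "card U = card (UNIV :: 'a set) - 1" by (simp add: U_def card_Diff_singleton)
  have inj: "inj_on (\<lambda>y. x * y) U" using assms by (auto intro: inj_onI)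
  have img: "(\<lambda>y. x * y) ` U = U"
  proof
    show "(\<lambda>y. x * y) ` U \<subseteq> U" using assms by (auto simp: U_def)
    show "U \<subseteq> (\<lambda>y. x * y) ` U"
    proof
      fix z assume "z \<in> U"
      then have "z = x * (z / x)" "z / x \<in> U" using assms by (auto simp: U_def)
      then show "z \<in> (\<lambda>y. x * y) ` U" by blast
    qed
  qed
  have "prod id U = prod id ((\<lambda>y. x * y) ` U)" using img by simp
  also have "\<dots> = prod (\<lambda>y. x * y) U" using inj by (simp add: prod.reindex)
  also have "\<dots> = x ^ card U * prod id U" by (simp add: prod.distrib)
  finally have "(x ^ card U - 1) * prod id U = 0" by (simp add: algebra_simps)
  moreover have "prod id U \<noteq> 0" using fin by (simp add: U_def)
  ultimately show ?thesis using cU by simp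
qed

lemma card_ge2: "card (UNIV :: 'a::{finite,field} set) \<ge> 2"
proof -
  have "card {0, 1 :: 'a} \<le> card (UNIV :: 'a set)" by (rule card_mono) auto
  then show ?thesis by simp
qed

lemma ff_powmod: fixes x :: "'a::{finite,field}" assumes "x \<noteq> 0"
  shows "x ^ n = x ^ (n mod (card (UNIV :: 'a set) - 1))"
proof -
  define m where "m = card (UNIV :: 'a set) - 1"
  have "x ^ n = x ^ (m * (n div m) + n mod m)" by (simp only: mult_div_mod_eq)
  also have "\<dots> = (x ^ m) ^ (n div m) * x ^ (n mod m)" by (simp only: power_add power_mult)
  also have "\<dots> = x ^ (n mod m)" using ff_fermat[OF assms] by (simp add: m_def)
  finally show ?thesis by (simp add: m_def)
qed

lemma pow_bij: assumes "d \<ge> 1"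
  shows "bij (\<lambda>x::'a::{finite,field}. x ^ d) \<longleftrightarrow> coprime d (card (UNIV :: 'a set) - 1)"
proof
  define q where "q = card (UNIV :: 'a set)"
  have q2: "q \<ge> 2" using card_ge2 unfolding q_def by blast
  assume cop: "coprime d (card (UNIV :: 'a set) - 1)"
  then obtain u where u: "[d * u = Suc 0] (mod (q - 1))" using cong_solve_coprime_nat q_def by blast
  define v where "v = u + (q - 1)"
  have dv: "d * v = d * u + d * (q - 1)" by (simp add: v_def distrib_left)
  have "(d * v) mod (q - 1) = (d * u) mod (q - 1)" unfolding dv by simp
  then have v: "(d * v) mod (q - 1) = 1 mod (q - 1)" using u by (simp add: cong_def)
  have v1: "d * v \<ge> 1" using assms q2 by (simp add: v_def)
  have inv: "(x ^ d) ^ v = x" for x :: 'a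
  proof (cases "x = 0")
    case True then show ?thesis using v1 by (simp add: power_mult[symmetric])
  next
    case False
    have "(x ^ d) ^ v = x ^ (d * v)" by (simp add: power_mult)
    also have "\<dots> = x ^ ((d * v) mod (q - 1))" using ff_powmod[OF False] by (simp add: q_def)
    also have "\<dots> = x ^ (1 mod (q - 1))" using v by simp
    also have "\<dots> = x ^ 1" using ff_powmod[OF False, of 1] by (simp add: q_def)
    finally show ?thesis by simp
  qed
  have "inj (\<lambda>x::'a. x ^ d)" by (rule inj_on_inverseI[where g = "\<lambda>y. y ^ v"]) (simp add: inv)
  then show "bij (\<lambda>x::'a. x ^ d)" by (simp add: bij_def finite_UNIV_inj_surj)
next
  define q where "q = card (UNIV :: 'a set)"
  have q2: "q \<ge> 2" using card_ge2 unfolding q_def by blast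
  assume b: "bij (\<lambda>x::'a. x ^ d)"
  show "coprime d (card (UNIV :: 'a set) - 1)"
  proof (rule ccontr)
    assume nc: "\<not> coprime d (card (UNIV :: 'a set) - 1)"
    define g where "g = gcd d (q - 1)"
    have g1: "g \<noteq> 1" using nc unfolding g_def q_def coprime_iff_gcd_eq_1 .
    have g0: "g > 0" using q2 by (simp add: g_def)
    have gd: "g dvd d" "g dvd q - 1" by (simp_all add: g_def)
    define m where "m = (q - 1) div g"
    have qm: "q - 1 = g * m" using gd by (simp add: m_def)
    have m1: "m \<ge> 1" using qm q2 by (cases m) auto
    have mlt: "m < q - 1" using qm g0 g1 m1 by (cases g) auto
    have injg: "inj (\<lambda>x::'a. x ^ g)"
    proof (rule injI)
      fix x y :: 'a assume "x ^ g = y ^ g"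
      then have "(x ^ g) ^ (d div g) = (y ^ g) ^ (d div g)" by simp
      then have "x ^ d = y ^ d" using gd by (simp flip: power_mult)
      then show "x = y" using b unfolding bij_def inj_def by blast
    qed
    then have surjg: "surj (\<lambda>x::'a. x ^ g)" by (simp add: finite_UNIV_inj_surj)
    define P :: "'a poly" where "P = Polynomial.monom 1 m - 1"
    have roots: "(UNIV :: 'a set) - {0} \<subseteq> {y. poly P y = 0}"
    proof
      fix y :: 'a assume y: "y \<in> UNIV - {0}"
      obtain x where x: "y = x ^ g" using surjg by (metis surjD)
      have "x \<noteq> 0" using x y g0 by auto
      then have "y ^ m = 1" using ff_fermat[of x] x qm by (simp add: q_def power_mult)
      then show "y \<in> {y. poly P y = 0}" by (simp add: P_def poly_monom)
    qed
    have Pnz: "P \<noteq> 0"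
    proof
      assume "P = 0"
      then have "Polynomial.coeff P m = 0" by simp
      then show False using m1 by (simp add: P_def coeff_diff coeff_monom)
    qed
    have "degree P \<le> m" unfolding P_def
      by (rule order.trans[OF degree_diff_le_max]) (simp add: degree_monom_eq)
    have "q - 1 = card ((UNIV :: 'a set) - {0})" by (simp add: q_def card_Diff_singleton)
    also have "\<dots> \<le> card {y. poly P y = 0}" by (rule card_mono[OF poly_roots_finite[OF Pnz] roots])
    also have "\<dots> \<le> degree P" by (rule card_poly_roots_bound[OF Pnz])
    finally show False using \<open>degree P \<le> m\<close> mlt by simp
  qed
qed



theorem theorem2p7:
  fixes p e k :: nat
  assumes "prime p" and "odd p" and "e \<ge> 1"
    and "card (UNIV :: 'a::{finite,field} set) = p ^ e"
    and "1 \<le> k" and "k \<le> e"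
  shows "is_perm_poly (\<lambda>c::'a. rev_dickson3 (2 * p ^ k) 1 c)
     \<longleftrightarrow> gcd ((p ^ k - 1) div 2) (p ^ e - 1) = 1"
proof -
  note pp = assms(1)
  have cpos: "CHAR('a) > 0" by (rule finite_imp_CHAR_pos) simp
  have cpr: "prime CHAR('a)" using prime_CHAR_semidom[OF cpos] .
  have "CHAR('a) dvd p ^ e" using CHAR_dvd_CARD[where 'a='a] assms(4) by simp
  then have "CHAR('a) dvd p" using cpr prime_dvd_power by blast
  then have cp: "CHAR('a) = p" using cpr pp primes_dvd_imp_eq by blast
  have p3: "p \<ge> 3" using pp assms(2) prime_ge_2_nat[OF pp] by (cases "p = 2") auto
  define N where "N = p ^ k"
  define d where "d = (N - 1) div 2"
  have N3: "N \<ge> 3"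
  proof -
    have "p ^ 1 \<le> p ^ k" by (rule power_increasing) (use assms(5) p3 in auto)
    then show ?thesis using p3 by (simp add: N_def)
  qed
  have d1: "d \<ge> 1" using N3 unfolding d_def by linarith
  have c2: "CHAR('a) \<noteq> 2" using cp p3 by simp
  have eq: "rev_dickson3 (2 * N) 1 c = (1 - 4 * c) ^ d" for c :: 'a
    using rev_SS[of N c] SS_field[OF cpr c2, of N k c] N3 cp by (simp add: N_def d_def)
  have four: "(4::'a) \<noteq> 0"
  proof
    assume "(4::'a) = 0"
    then have "of_nat 4 = (0::'a)" by simp
    then have "p dvd 4" using cp by (simp only: of_nat_eq_0_iff_char_dvd)
    then have "p dvd 2 * 2" by simp
    then have "p dvd 2" using pp prime_dvd_mult_iff by blast
    then show False using dvd_imp_le[of p 2] p3 by simp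
  qed
  define h :: "'a \<Rightarrow> 'a" where "h = (\<lambda>c. 1 - 4 * c)"
  define hi :: "'a \<Rightarrow> 'a" where "hi = (\<lambda>y. (1 - y) / 4)"
  have hh: "h \<circ> hi = id" "hi \<circ> h = id" using four by (auto simp: h_def hi_def fun_eq_iff field_simps)
  have bh: "bij h" "bij hi" using hh by (auto intro: o_bij)
  define pw :: "'a \<Rightarrow> 'a" where "pw = (\<lambda>y. y ^ d)"
  have F: "(\<lambda>c::'a. rev_dickson3 (2 * p ^ k) 1 c) = pw \<circ> h"
    by (simp add: fun_eq_iff eq pw_def h_def flip: N_def)
  have "bij (pw \<circ> h) \<longleftrightarrow> bij pw"
  proof
    assume "bij (pw \<circ> h)"
    then have "bij ((pw \<circ> h) \<circ> hi)" using bij_comp[OF bh(2)] by blast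
    then show "bij pw" using hh by (simp add: comp_assoc)
  next
    assume "bij pw" then show "bij (pw \<circ> h)" using bij_comp[OF bh(1)] by blast
  qed
  also have "\<dots> \<longleftrightarrow> coprime d (card (UNIV :: 'a set) - 1)"
    unfolding pw_def by (rule pow_bij[OF d1])
  also have "\<dots> \<longleftrightarrow> gcd ((p ^ k - 1) div 2) (p ^ e - 1) = 1"
    by (simp only: assms(4) d_def N_def coprime_iff_gcd_eq_1)
  finally show ?thesis unfolding is_perm_poly_def F .
qed

end
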